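(* For all positive integers $d$ and $q$, there exists a connected graph $G$ with $\mathrm{diam}(G)=d$ and \[ \Delta(G)=\begin{cases} 2^{q}-1, & \text{if } d=1,\\ 2^{q}, & \text{if } d=2,\\ 2^{q}+1, & \text{if } d\geq 3,\end{cases} \] such that $G$ admits an interval edge coloring (i.e. $G\in\mathfrak{N}$) and \[ W(G)\geq \begin{cases} (d+1)(\Delta(G)-1)-q+2, & \text{if } d=1,\\ (d+1)(\Delta(G)-1)-q+1, & \text{if } d=2,\\ (d+1)(\Delta(G)-1)-q-2, & \text{if } d\geq 3.\end{cases} \]
   Context: All graphs are finite, undirected, without loops or multiple edges. $\Delta(G)$ denotes the maximum degree of $G$ and $\mathrm{diam}(G)$ its diameter. For a positive integer $t$, an interval $t$-coloring of a graph $G$ is a map assigning to each edge of $G$ a color from $\{1,2,\ldots,t\}$ such that every color $i\in\{1,\ldots,t\}$ is used on at least one edge, edges sharing a vertex receive distinct colors, and for each vertex $v$ the set of colors of edges incident to $v$ is an interval of consecutive integers. $\mathfrak{N}$ denotes the set of graphs that admit an interval $t$-coloring for some $t$, and for $G\in\mathfrak{N}$, $W(G)$ denotes the greatest $t$ for which $G$ has an interval $t$-coloring. *)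

theory Defs
  imports Main
begin

definition graph :: "'a set \<Rightarrow> 'a set set \<Rightarrow> bool" where
  "graph V E \<longleftrightarrow> finite V \<and> (\<forall>e\<in>E. \<exists>u v. e = {u, v} \<and> u \<noteq> v \<and> u \<in> V \<and> v \<in> V)"

definition edges_at :: "'a set set \<Rightarrow> 'a \<Rightarrow> 'a set set" where
  "edges_at E v = {e \<in> E. v \<in> e}"

definition degree :: "'a set set \<Rightarrow> 'a \<Rightarrow> nat" where
  "degree E v = card (edges_at E v)"

definition max_degree :: "'a set \<Rightarrow> 'a set set \<Rightarrow> nat" where
  "max_degree V E = Max (degree E ` V)"

definition walk :: "'a set set \<Rightarrow> 'a list \<Rightarrow> bool" where
  "walk E xs \<longleftrightarrow> xs \<noteq> [] \<and> (\<forall>i. Suc i < length xs \<longrightarrow> {xs ! i, xs ! Suc i} \<in> E)"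

definition walk_between :: "'a set set \<Rightarrow> 'a \<Rightarrow> 'a \<Rightarrow> 'a list \<Rightarrow> bool" where
  "walk_between E u v xs \<longleftrightarrow> walk E xs \<and> hd xs = u \<and> last xs = v"

definition connected_graph :: "'a set \<Rightarrow> 'a set set \<Rightarrow> bool" where
  "connected_graph V E \<longleftrightarrow> graph V E \<and> V \<noteq> {} \<and>
     (\<forall>u\<in>V. \<forall>v\<in>V. \<exists>xs. walk_between E u v xs)"

definition dist :: "'a set set \<Rightarrow> 'a \<Rightarrow> 'a \<Rightarrow> nat" where
  "dist E u v = (LEAST n. \<exists>xs. walk_between E u v xs \<and> length xs = Suc n)"

definition diam :: "'a set \<Rightarrow> 'a set set \<Rightarrow> nat" where
  "diam V E = Max {dist E u v | u v. u \<in> V \<and> v \<in> V}"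

definition interval_coloring :: "'a set \<Rightarrow> 'a set set \<Rightarrow> nat \<Rightarrow> ('a set \<Rightarrow> nat) \<Rightarrow> bool" where
  "interval_coloring V E t c \<longleftrightarrow>
     (\<forall>e\<in>E. c e \<in> {1..t}) \<and>
     (\<forall>i\<in>{1..t}. \<exists>e\<in>E. c e = i) \<and>
     (\<forall>v\<in>V. inj_on c (edges_at E v)) \<and>
     (\<forall>v\<in>V. \<exists>a b. c ` edges_at E v = {a..b})"

definition has_interval_coloring :: "'a set \<Rightarrow> 'a set set \<Rightarrow> nat \<Rightarrow> bool" where
  "has_interval_coloring V E t \<longleftrightarrow> t \<ge> 1 \<and> (\<exists>c. interval_coloring V E t c)"

definition in_N :: "'a set \<Rightarrow> 'a set set \<Rightarrow> bool" where
  "in_N V E \<longleftrightarrow> (\<exists>t. has_interval_coloring V E t)"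

definition W :: "'a set \<Rightarrow> 'a set set \<Rightarrow> nat" where
  "W V E = Max {t. has_interval_coloring V E t}"

end

theory Submission
  imports Defs
begin


fun aa :: "nat \<Rightarrow> nat \<Rightarrow> nat" where
  "aa 0 x = 1"
| "aa (Suc q) x = (if x < 2^q then aa q x else aa q (x - 2^q) + 2^q - 1)"

fun kap :: "nat \<Rightarrow> nat \<Rightarrow> nat \<Rightarrow> nat" and lam :: "nat \<Rightarrow> nat \<Rightarrow> nat \<Rightarrow> nat" where
  "kap 0 x y = 0"
| "kap (Suc q) x y = (if x < 2^q \<and> y < 2^q then kap q x y
     else if 2^q \<le> x \<and> 2^q \<le> y then kap q (x - 2^q) (y - 2^q) + 2 * 2^q - 1
     else lam q (x mod 2^q) (y mod 2^q) + 2^q - 1)"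
| "lam 0 x y = 1"
| "lam (Suc q) x y = (if x < 2^q \<and> y < 2^q then (if x = y then aa q x + 2 * 2^q - 1 else kap q x y)
     else if 2^q \<le> x \<and> 2^q \<le> y then lam q (x - 2^q) (y - 2^q) + 2 * 2^q - 1
     else lam q (x mod 2^q) (y mod 2^q) + 2^q - 1)"

lemma kl_sym: "kap q x y = kap q y x \<and> lam q x y = lam q y x"
  by (induction q arbitrary: x y) auto

lemma aa_bounds: "x < 2^q \<Longrightarrow> 1 \<le> aa q x \<and> aa q x + q \<le> 2^q"
proof (induction q arbitrary: x)
  case 0 then show ?case by simp
next
  case (Suc q)
  have p: "(1::nat) \<le> 2^q" by simp
  show ?case
  proof (cases "x < 2^q")
    case True with Suc.IH[of x] p show ?thesis by simp
  next
    case False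
    with Suc.prems have "x - 2^q < 2^q" by simp
    from Suc.IH[OF this] False p show ?thesis by simp linarith
  qed
qed

lemma aa_0: "aa q 0 = 1" by (induction q) auto

lemma aa_last: "aa q (2^q - 1) + q = 2^q"
proof (induction q)
  case 0 then show ?case by simp
next
  case (Suc q)
  have p: "(1::nat) \<le> 2^q" by simp
  have "\<not> (2::nat)^Suc q - 1 < 2^q" using p by simp
  moreover have "(2::nat)^Suc q - 1 - 2^q = 2^q - 1" by simp
  ultimately have "aa (Suc q) (2^Suc q - 1) = aa q (2^q - 1) + 2^q - 1" by simp
  moreover have "(2::nat)^Suc q = 2 * 2^q" by simp
  ultimately show ?case using Suc.IH p by linarith
qed

lemma ivl_un: "a \<le> c \<Longrightarrow> c \<le> Suc b \<Longrightarrow> b \<le> d \<Longrightarrow> d = e \<Longrightarrow> a = a' \<Longrightarrow> {a..b} \<union> {c..(d::nat)} = {a'..e}"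
  by auto

lemma img_shift: "f ` A = {a..b::nat} \<Longrightarrow> (\<lambda>z. f z + c) ` A = {a+c..b+c}"
proof -
  assume h: "f ` A = {a..b}"
  have "(\<lambda>z. f z + c) ` A = (\<lambda>n. n + c) ` (f ` A)" by (simp add: image_image)
  also have "\<dots> = {a+c..b+c}" using h by simp
  finally show ?thesis .
qed

lemma sh1: "(\<lambda>z. z + n) ` {..<n} = {n..<2*(n::nat)}"
proof (rule set_eqI, rule iffI)
  fix y assume "y \<in> {n..<2*n}" then show "y \<in> (\<lambda>z. z + n) ` {..<n}"
    by (intro image_eqI[where x="y - n"]) auto
qed auto

lemma sh2: "(\<lambda>z. z + n) ` {y. y < n \<and> y \<noteq> x'} = {y. n \<le> y \<and> y < 2*(n::nat) \<and> y \<noteq> x' + n}"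
proof (rule set_eqI, rule iffI)
  fix y assume "y \<in> {y. n \<le> y \<and> y < 2*(n::nat) \<and> y \<noteq> x' + n}" then show "y \<in> (\<lambda>z. z + n) ` {y. y < n \<and> y \<noteq> x'}"
    by (intro image_eqI[where x="y - n"]) auto
qed auto

lemma kl_img: "x < 2^q \<Longrightarrow> kap q x ` {y. y < 2^q \<and> y \<noteq> x} = {aa q x .. aa q x + 2^q - 2}
   \<and> lam q x ` {..<2^q} = {aa q x .. aa q x + 2^q - 1}"
proof (induction q arbitrary: x)
  case 0 then show ?case by auto
next
  case (Suc q)
  define n :: nat where "n = 2^q"
  have n1: "1 \<le> n" unfolding n_def by simp
  have nS: "(2::nat)^Suc q = 2*n" unfolding n_def by simp
  show ?case
  proof (cases "x < n")
    case True
    have IH: "kap q x ` {y. y < n \<and> y \<noteq> x} = {aa q x .. aa q x + n - 2}"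
             "lam q x ` {..<n} = {aa q x .. aa q x + n - 1}"
      using Suc.IH[of x] True unfolding n_def by auto
    have ax: "aa (Suc q) x = aa q x" using True unfolding n_def by simp
    have s1: "{y. y < 2*n \<and> y \<noteq> x} = {y. y < n \<and> y \<noteq> x} \<union> (\<lambda>z. z + n) ` {..<n}"
      unfolding sh1 using True by auto
    have s2: "{..<2*n} = {..<n} \<union> (\<lambda>z. z + n) ` {..<n}"
      unfolding sh1 by auto
    have k1: "kap (Suc q) x ` {y. y < n \<and> y \<noteq> x} = kap q x ` {y. y < n \<and> y \<noteq> x}"
      using True unfolding n_def by (intro image_cong) auto
    have k2: "kap (Suc q) x ` ((\<lambda>z. z + n) ` {..<n}) = (\<lambda>z. lam q x z + (n - 1)) ` {..<n}"
      using True unfolding image_image n_def by (intro image_cong) auto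
    have l1: "lam (Suc q) x ` {..<n} = insert (aa q x + 2*n - 1) (kap q x ` {y. y < n \<and> y \<noteq> x})"
    proof -
      have "{..<n} = insert x {y. y < n \<and> y \<noteq> x}" using True by auto
      then have "lam (Suc q) x ` {..<n} = insert (lam (Suc q) x x) (lam (Suc q) x ` {y. y < n \<and> y \<noteq> x})"
        by (metis image_insert)
      also have "lam (Suc q) x ` {y. y < n \<and> y \<noteq> x} = kap q x ` {y. y < n \<and> y \<noteq> x}"
        using True unfolding n_def by (intro image_cong) auto
      finally show ?thesis using True unfolding n_def by simp
    qed
    have l2: "lam (Suc q) x ` ((\<lambda>z. z + n) ` {..<n}) = (\<lambda>z. lam q x z + (n - 1)) ` {..<n}"
      using True unfolding image_image n_def by (intro image_cong) auto
    have cr: "(\<lambda>z. lam q x z + (n - 1)) ` {..<n} = {aa q x + (n-1) .. aa q x + n - 1 + (n-1)}"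
      by (rule img_shift[OF IH(2)])
    define a where "a = aa q x"
    have a1: "1 \<le> a" unfolding a_def using aa_bounds[of x q] True n_def by simp
    have e1: "{a..a + n - 2} \<union> {a + (n - 1)..a + n - 1 + (n - 1)} = {a..a + 2*n - 2}"
      by (rule ivl_un) (use n1 a1 in linarith)+
    have e2: "insert (a + 2 * n - 1) {a..a + n - 2} \<union> {a + (n - 1)..a + n - 1 + (n - 1)} = {a..a + 2*n - 1}"
    proof -
      have "insert (a + 2 * n - 1) {a..a + n - 2} \<union> {a + (n - 1)..a + n - 1 + (n - 1)}
           = ({a..a + n - 2} \<union> {a + (n - 1)..a + n - 1 + (n - 1)}) \<union> {a + 2*n - 1..a + 2*n - 1}" by auto
      also have "\<dots> = {a..a + 2*n - 1}" unfolding e1 by (rule ivl_un) (use n1 a1 in linarith)+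
      finally show ?thesis .
    qed
    show ?thesis
      unfolding nS s1 s2 image_Un k1 k2 l1 l2 cr IH(1) ax a_def[symmetric] e1 e2 by simp
  next
    case False
    define x' where "x' = x - n"
    have x'n: "x' < n" using Suc.prems False unfolding x'_def n_def by simp
    have xx: "x = x' + n" using False unfolding x'_def by simp
    have IH: "kap q x' ` {y. y < n \<and> y \<noteq> x'} = {aa q x' .. aa q x' + n - 2}"
             "lam q x' ` {..<n} = {aa q x' .. aa q x' + n - 1}"
      using Suc.IH[of x'] x'n unfolding n_def by auto
    have ax: "aa (Suc q) x = aa q x' + n - 1" using False unfolding n_def x'_def by simp
    have s1: "{y. y < 2*n \<and> y \<noteq> x} = {..<n} \<union> (\<lambda>z. z + n) ` {y. y < n \<and> y \<noteq> x'}"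
      unfolding sh2 using xx by auto
    have s2: "{..<2*n} = {..<n} \<union> (\<lambda>z. z + n) ` {..<n}"
      unfolding sh1 by auto
    have xm: "x mod n = x'" using xx x'n by simp
    have k1: "kap (Suc q) x ` {..<n} = (\<lambda>z. lam q x' z + (n - 1)) ` {..<n}"
      using False xm unfolding n_def by (intro image_cong) auto
    have k2: "kap (Suc q) x ` ((\<lambda>z. z + n) ` {y. y < n \<and> y \<noteq> x'}) = (\<lambda>z. kap q x' z + (2*n - 1)) ` {y. y < n \<and> y \<noteq> x'}"
      using False xx unfolding image_image n_def by (intro image_cong) auto
    have l1: "lam (Suc q) x ` {..<n} = (\<lambda>z. lam q x' z + (n - 1)) ` {..<n}"
      using False xm unfolding n_def by (intro image_cong) auto
    have l2: "lam (Suc q) x ` ((\<lambda>z. z + n) ` {..<n}) = (\<lambda>z. lam q x' z + (2*n - 1)) ` {..<n}"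
      using False xx unfolding image_image n_def by (intro image_cong) auto
    define a where "a = aa q x'"
    have a1: "1 \<le> a" unfolding a_def using aa_bounds[of x' q] x'n n_def by simp
    have e1: "{a + (n - 1)..a + n - 1 + (n - 1)} \<union> {a + (2*n - 1)..a + n - 2 + (2*n - 1)} = {a + n - 1..a + n - 1 + 2*n - 2}"
      by (rule ivl_un) (use n1 a1 in linarith)+
    have e2: "{a + (n - 1)..a + n - 1 + (n - 1)} \<union> {a + (2*n - 1)..a + n - 1 + (2*n - 1)} = {a + n - 1..a + n - 1 + 2*n - 1}"
      by (rule ivl_un) (use n1 a1 in linarith)+
    show ?thesis
      unfolding nS s1 s2 image_Un k1 k2 l1 l2 ax img_shift[OF IH(1)] img_shift[OF IH(2)] a_def[symmetric] e1 e2 by simp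
  qed
qed



locale chain =
  fixes d q :: nat
  assumes d1: "1 \<le> d" and q1: "1 \<le> q"
begin

abbreviation N where "N \<equiv> (2::nat)^q"
definition VV :: "nat set" where "VV = {..<d*N}"
definition adj :: "nat \<Rightarrow> nat \<Rightarrow> bool" where
  "adj u w \<longleftrightarrow> (u div N = w div N) \<or> (u mod N = w mod N \<and> (u div N + 1 = w div N \<or> w div N + 1 = u div N))"
definition EE :: "nat set set" where
  "EE = {{u,w} | u w. u \<in> VV \<and> w \<in> VV \<and> u \<noteq> w \<and> adj u w}"
definition colr :: "nat \<Rightarrow> nat \<Rightarrow> nat" where
  "colr u w = (if u div N = w div N then kap q (u mod N) (w mod N) + (u div N)*N
      else aa q (u mod N) + N - 1 + min (u div N) (w div N) * N)"
definition col :: "nat set \<Rightarrow> nat" where "col e = colr (Min e) (Max e)"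
definition nb :: "nat \<Rightarrow> nat set" where "nb v = {w \<in> VV. w \<noteq> v \<and> adj v w}"

lemma Npos: "0 < N" by simp
lemma N2: "2 \<le> N" using q1 by (metis power_increasing power_one_right zero_less_numeral one_le_numeral)

lemma adj_sym: "adj u w = adj w u" unfolding adj_def by auto

lemma colr_sym: "adj u w \<Longrightarrow> colr u w = colr w u"
  unfolding colr_def adj_def using kl_sym by (auto simp: min.commute)

lemma col_eq: assumes a: "adj u w" shows "col {u,w} = colr u w"
  unfolding col_def using colr_sym[OF a] by (cases "u \<le> w") (auto simp: min_def max_def)

lemma graph: "graph VV EE"
  unfolding graph_def EE_def VV_def by auto

lemma EE_mem: "{u,w} \<in> EE \<longleftrightarrow> u \<in> VV \<and> w \<in> VV \<and> u \<noteq> w \<and> adj u w"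
  unfolding EE_def using adj_sym by (auto simp: doubleton_eq_iff)

lemma edges_at_eq: assumes vV: "v \<in> VV" shows "edges_at EE v = (\<lambda>w. {v,w}) ` nb v"
proof (rule set_eqI, rule iffI)
  fix e assume "e \<in> edges_at EE v"
  then obtain u w where e: "e = {u,w}" "u \<in> VV" "w \<in> VV" "u \<noteq> w" "adj u w" "v \<in> e"
    unfolding edges_at_def EE_def by auto
  show "e \<in> (\<lambda>w. {v,w}) ` nb v"
  proof (cases "v = u")
    case True then show ?thesis using e unfolding nb_def by auto
  next
    case False then have "v = w" using e by auto
    then show ?thesis using e adj_sym[of u w] unfolding nb_def by (auto simp: insert_commute)
  qed
next
  fix e assume "e \<in> (\<lambda>w. {v,w}) ` nb v"
  then obtain w where "e = {v,w}" "w \<in> nb v" by auto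
  then show "e \<in> edges_at EE v" using vV unfolding edges_at_def nb_def by (auto simp: EE_mem)
qed

lemma divmod1: "y < N \<Longrightarrow> (j*N + y) div N = j" by simp
lemma divmod2: "y < N \<Longrightarrow> (j*N + y) mod N = y" by simp

lemma nb_eq:
  assumes v: "v \<in> VV"
  shows "nb v = (\<lambda>y. (v div N)*N + y) ` {y. y < N \<and> y \<noteq> v mod N}
     \<union> (if 0 < v div N then {v - N} else {}) \<union> (if v div N + 1 < d then {v + N} else {})"
    (is "_ = ?C \<union> ?D \<union> ?U")
proof -
  define j where "j = v div N"
  define x where "x = v mod N"
  have vjx: "v = j*N + x" unfolding j_def x_def using div_mult_mod_eq[of v N] by simp
  have xN: "x < N" unfolding x_def by simp
  have jd: "j < d" using v unfolding VV_def j_def by (simp add: less_mult_imp_div_less)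
  show ?thesis
  proof (rule set_eqI, rule iffI)
    fix w assume w: "w \<in> nb v"
    then have wV: "w < d*N" and wv: "w \<noteq> v" and a: "adj v w" unfolding nb_def VV_def by auto
    define j' where "j' = w div N"
    define x' where "x' = w mod N"
    have wjx: "w = j'*N + x'" unfolding j'_def x'_def using div_mult_mod_eq[of w N] by simp
    from a have "j = j' \<or> (x = x' \<and> (j + 1 = j' \<or> j' + 1 = j))"
      unfolding adj_def j_def j'_def x_def x'_def by auto
    then show "w \<in> ?C \<union> ?D \<union> ?U"
    proof (elim disjE conjE)
      assume "j = j'"
      have "x' < N" unfolding x'_def by simp
      moreover have "x' \<noteq> x" using wv vjx wjx \<open>j = j'\<close> by auto
      ultimately have "x' \<noteq> x" "x' < N" by auto
      then have "w \<in> ?C" unfolding j_def[symmetric] x_def[symmetric] using \<open>j = j'\<close> wjx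
        by (intro image_eqI[where x=x']) auto
      then show ?thesis by (rule UnI1[OF UnI1])
    next
      assume "x = x'" "j + 1 = j'"
      then have "w = v + N" "j + 1 < d" using vjx wjx wV
        by (auto simp: algebra_simps) (metis j'_def less_mult_imp_div_less wV)
      then show ?thesis unfolding j_def[symmetric] by simp
    next
      assume "x = x'" "j' + 1 = j"
      then have "w = v - N" "0 < j" using vjx wjx by (auto simp: algebra_simps)
      then show ?thesis unfolding j_def[symmetric] by simp
    qed
  next
    fix w assume "w \<in> ?C \<union> ?D \<union> ?U"
    then consider (C) y where "y < N" "y \<noteq> x" "w = j*N + y"
      | (D) "0 < j" "w = v - N" | (U) "j + 1 < d" "w = v + N"
      unfolding j_def x_def by (auto split: if_splits)
    then show "w \<in> nb v"
    proof cases
      case C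
      have "w < d*N"
      proof -
        have "j*N + y < (j+1)*N" using C by simp
        also have "\<dots> \<le> d*N" using jd by (intro mult_right_mono) auto
        finally show ?thesis using C by simp
      qed
      moreover have "w \<noteq> v" using C vjx by auto
      moreover have "adj v w" unfolding adj_def using C vjx xN by simp
      ultimately show ?thesis unfolding nb_def VV_def by auto
    next
      case D
      then obtain k where k: "j = Suc k" by (cases j) auto
      have wk: "w = k*N + x" using D(2) vjx k by simp
      have "w < d*N" using v wk vjx D unfolding VV_def by auto
      moreover have "w \<noteq> v" using D(2) vjx k by simp
      moreover have "w div N = k" "w mod N = x" using wk xN by simp_all
      moreover have "adj v w" unfolding adj_def using calculation(3,4) k j_def x_def by simp
      ultimately show ?thesis unfolding nb_def VV_def by auto
    next
      case U
      have wk: "w = (j+1)*N + x" using U(2) vjx by simp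
      have "w < d*N"
      proof -
        have "(j+1)*N + x < (j+2)*N" using xN by simp
        also have "\<dots> \<le> d*N" using U by (intro mult_right_mono) auto
        finally show ?thesis using wk by simp
      qed
      moreover have "w \<noteq> v" using U(2) by simp
      moreover have "w div N = j+1" "w mod N = x" using wk xN by (simp_all only: divmod1 divmod2)
      moreover have "adj v w" unfolding adj_def using calculation(3,4) j_def x_def by simp
      ultimately show ?thesis unfolding nb_def VV_def by auto
    qed
  qed
qed

definition lo :: "nat \<Rightarrow> nat" where
  "lo v = aa q (v mod N) + (v div N)*N - (if 0 < v div N then 1 else 0)"
definition hi :: "nat \<Rightarrow> nat" where
  "hi v = aa q (v mod N) + (v div N)*N + N - 2 + (if v div N + 1 < d then 1 else 0)"

lemma colr_img:
  assumes v: "v \<in> VV"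
  shows "colr v ` nb v = {lo v..hi v}"
proof -
  define j where "j = v div N"
  define x where "x = v mod N"
  have vjx: "v = j*N + x" unfolding j_def x_def using div_mult_mod_eq[of v N] by simp
  have xN: "x < N" unfolding x_def by simp
  define A where "A = aa q x + j*N"
  have A1: "1 \<le> A" unfolding A_def using aa_bounds[OF xN] by simp
  have NN: "2 \<le> N" by (rule N2)
  have C: "colr v ` ((\<lambda>y. j*N + y) ` {y. y < N \<and> y \<noteq> x}) = {A..A + N - 2}"
  proof -
    have "colr v ` ((\<lambda>y. j*N + y) ` {y. y < N \<and> y \<noteq> x}) = (\<lambda>y. kap q x y + j*N) ` {y. y < N \<and> y \<noteq> x}"
      unfolding image_image
    proof (rule image_cong[OF refl])
      fix y assume "y \<in> {y. y < N \<and> y \<noteq> x}"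
      then have yN: "y < N" by simp
      have "(j*N + y) div N = j" "(j*N + y) mod N = y" using yN by (simp_all only: divmod1 divmod2)
      then show "colr v (j*N + y) = kap q x y + j*N" unfolding colr_def using j_def x_def by simp
    qed
    also have "\<dots> = {aa q x + j*N .. aa q x + 2^q - 2 + j*N}"
      by (rule img_shift) (use kl_img[OF xN] in blast)
    also have "{aa q x + j*N .. aa q x + 2^q - 2 + j*N} = {A..A+N-2}" unfolding A_def using NN
      by (intro arg_cong2[where f=atLeastAtMost]) linarith+
    finally show ?thesis .
  qed
  have D: "0 < j \<Longrightarrow> colr v (v - N) = A - 1"
  proof -
    assume j0: "0 < j"
    then obtain k where k: "j = Suc k" by (cases j) auto
    have "v - N = k*N + x" using vjx k by simp
    then have "(v - N) div N = k" "(v - N) mod N = x" using xN by (simp_all only: divmod1 divmod2)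
    moreover have jk: "(v div N)*N = N + k*N" using k j_def by simp
    ultimately show ?thesis unfolding colr_def A_def using j_def x_def k NN by simp
  qed
  have U: "colr v (v + N) = A + N - 1"
  proof -
    have "v + N = (j+1)*N + x" using vjx by simp
    then have "(v + N) div N = j+1" "(v + N) mod N = x" using xN by (simp_all only: divmod1 divmod2)
    then show ?thesis unfolding colr_def A_def using j_def x_def NN by simp
  qed
  have lo: "lo v = A - (if 0 < j then 1 else 0)" unfolding lo_def A_def j_def x_def by simp
  have hi: "hi v = A + N - 2 + (if j + 1 < d then 1 else 0)" unfolding hi_def A_def j_def x_def by simp
  have "colr v ` nb v = {A..A + N - 2} \<union> (if 0 < j then {A - 1} else {}) \<union> (if j + 1 < d then {A + N - 1} else {})"
    unfolding nb_eq[OF v] image_Un j_def[symmetric] x_def[symmetric] C using D U by auto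
  also have "\<dots> = {lo v..hi v}" unfolding lo hi using A1 NN by (auto split: if_splits)
  finally show ?thesis .
qed

lemma card_nb:
  assumes v: "v \<in> VV"
  shows "card (nb v) \<le> N - 1 + (if 0 < v div N then 1 else 0) + (if v div N + 1 < d then 1 else 0)"
proof -
  have xN: "v mod N < N" by simp
  have c1: "card ((\<lambda>y. (v div N)*N + y) ` {y. y < N \<and> y \<noteq> v mod N}) = N - 1"
  proof -
    have "card ((\<lambda>y. (v div N)*N + y) ` {y. y < N \<and> y \<noteq> v mod N}) = card {y. y < N \<and> y \<noteq> v mod N}"
      by (rule card_image) (auto simp: inj_on_def)
    moreover have "{y. y < N \<and> y \<noteq> v mod N} = {..<N} - {v mod N}" by auto
    moreover have "card ({..<N} - {v mod N}) = N - 1" using xN by simp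
    ultimately show ?thesis by simp
  qed
  show ?thesis unfolding nb_eq[OF v]
    by (rule order_trans[OF card_Un_le], rule add_mono[OF order_trans[OF card_Un_le]]) (auto simp: c1)
qed

lemma hi_lo: "v \<in> VV \<Longrightarrow> Suc (hi v) - lo v = N - 1 + (if 0 < v div N then 1 else 0) + (if v div N + 1 < d then 1 else 0)"
  unfolding hi_def lo_def using N2 aa_bounds[of "v mod N" q] by auto

lemma inj_colr: assumes v: "v \<in> VV" shows "inj_on (colr v) (nb v)"
proof (rule eq_card_imp_inj_on)
  show "finite (nb v)" unfolding nb_def VV_def by simp
  have "card (colr v ` nb v) = Suc (hi v) - lo v" unfolding colr_img[OF v] by simp
  then have "card (nb v) \<le> card (colr v ` nb v)" using card_nb[OF v] hi_lo[OF v] by simp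
  moreover have "card (colr v ` nb v) \<le> card (nb v)" by (rule card_image_le) (simp add: nb_def VV_def)
  ultimately show "card (colr v ` nb v) = card (nb v)" by simp
qed

lemma col_img: assumes v: "v \<in> VV" shows "col ` edges_at EE v = {lo v..hi v}"
proof -
  have "col ` edges_at EE v = colr v ` nb v"
    unfolding edges_at_eq[OF v] image_image
    by (rule image_cong[OF refl]) (auto simp: nb_def col_eq)
  then show ?thesis using colr_img[OF v] by simp
qed

lemma inj_col: assumes v: "v \<in> VV" shows "inj_on col (edges_at EE v)"
  unfolding edges_at_eq[OF v]
proof (rule inj_on_imageI)
  show "inj_on (col \<circ> (\<lambda>w. {v, w})) (nb v)"
    using inj_colr[OF v] by (rule inj_on_cong[THEN iffD2, rotated]) (auto simp: nb_def col_eq)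
qed

lemma degree_eq: assumes v: "v \<in> VV"
  shows "degree EE v = N - 1 + (if 0 < v div N then 1 else 0) + (if v div N + 1 < d then 1 else 0)"
proof -
  have "degree EE v = card (col ` edges_at EE v)" unfolding degree_def
    using card_image[OF inj_col[OF v]] by simp
  then show ?thesis using col_img[OF v] hi_lo[OF v] by simp
qed

end


lemma walk_single: "walk E [u]" unfolding walk_def by simp

lemma walk_Cons2: "walk E (a # b # xs) \<longleftrightarrow> {a,b} \<in> E \<and> walk E (b # xs)"
proof
  assume h: "walk E (a # b # xs)"
  have "{a,b} \<in> E" using h unfolding walk_def by (metis length_Cons nth_Cons_0 nth_Cons_Suc zero_less_Suc Suc_less_eq)
  moreover have "walk E (b # xs)" unfolding walk_def
  proof (intro conjI allI impI)
    fix i assume "Suc i < length (b # xs)"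
    then have "Suc (Suc i) < length (a # b # xs)" by simp
    then have "{(a#b#xs) ! Suc i, (a#b#xs) ! Suc (Suc i)} \<in> E" using h unfolding walk_def by blast
    then show "{(b # xs) ! i, (b # xs) ! Suc i} \<in> E" by simp
  qed simp
  ultimately show "{a,b} \<in> E \<and> walk E (b # xs)" by simp
next
  assume h: "{a,b} \<in> E \<and> walk E (b # xs)"
  show "walk E (a # b # xs)" unfolding walk_def
  proof (intro conjI allI impI)
    fix i assume i: "Suc i < length (a # b # xs)"
    show "{(a # b # xs) ! i, (a # b # xs) ! Suc i} \<in> E"
    proof (cases i)
      case 0 then show ?thesis using h by simp
    next
      case (Suc k)
      then have "Suc k < length (b # xs)" using i by simp
      then have "{(b#xs) ! k, (b#xs) ! Suc k} \<in> E" using h unfolding walk_def by blast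
      then show ?thesis using Suc by simp
    qed
  qed simp
qed

lemma walk_append: "walk E xs \<Longrightarrow> walk E ys \<Longrightarrow> last xs = hd ys \<Longrightarrow> walk E (xs @ tl ys)"
proof (induction xs)
  case Nil then show ?case by (simp add: walk_def)
next
  case (Cons a xs)
  show ?case
  proof (cases xs)
    case Nil
    then have "ys = a # tl ys" using Cons.prems by (cases ys) (auto simp: walk_def)
    then show ?thesis using Cons.prems Nil by simp
  next
    case (Cons b xs')
    have h2: "walk E (a # b # xs')" using Cons.prems(1) \<open>xs = b # xs'\<close> by simp
    have e: "{a,b} \<in> E" and w: "walk E xs" using h2 \<open>xs = b # xs'\<close> by (simp_all add: walk_Cons2)
    have "walk E (xs @ tl ys)" using Cons.IH[OF w Cons.prems(2)] Cons.prems(3) \<open>xs = b # xs'\<close> by simp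
    then show ?thesis using e \<open>xs = b # xs'\<close> by (simp add: walk_Cons2)
  qed
qed

lemma walk_rev: "walk E xs \<Longrightarrow> walk E (rev xs)"
proof (induction xs)
  case Nil then show ?case by (simp add: walk_def)
next
  case (Cons a xs)
  show ?case
  proof (cases xs)
    case Nil then show ?thesis using Cons.prems by simp
  next
    case (Cons b xs')
    have h2: "walk E (a # b # xs')" using Cons.prems(1) \<open>xs = b # xs'\<close> by simp
    have e: "{a,b} \<in> E" and w: "walk E xs" using h2 \<open>xs = b # xs'\<close> by (simp_all add: walk_Cons2)
    have e2: "walk E [b, a]" using e walk_Cons2[of E b a "[]"] walk_single by (simp add: insert_commute)
    have "walk E (rev xs @ tl [b,a])"
      by (rule walk_append[OF Cons.IH[OF w] e2]) (simp add: Cons)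
    then show ?thesis by simp
  qed
qed

lemma walk_between_rev: "walk_between E u w xs \<Longrightarrow> walk_between E w u (rev xs)"
  unfolding walk_between_def using walk_rev by (auto simp: hd_rev last_rev walk_def)

lemma walk_between_app: "walk_between E u v xs \<Longrightarrow> walk_between E v w ys \<Longrightarrow>
   walk_between E u w (xs @ tl ys) \<and> length (xs @ tl ys) = length xs + length ys - 1"
  unfolding walk_between_def
proof (elim conjE, intro conjI)
  assume h: "walk E xs" "hd xs = u" "last xs = v" "walk E ys" "hd ys = v" "last ys = w"
  then have ne: "xs \<noteq> []" "ys \<noteq> []" by (auto simp: walk_def)
  show "walk E (xs @ tl ys)" using walk_append[OF h(1) h(4)] h(3,5) by simp
  show "hd (xs @ tl ys) = u" using h ne by simp
  show "last (xs @ tl ys) = w" using h ne by (cases ys) auto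
  show "length (xs @ tl ys) = length xs + length ys - 1" using ne by (cases ys) auto
qed

context chain begin

definition ld :: "nat \<Rightarrow> nat \<Rightarrow> nat" where
  "ld u w = (if u div N \<le> w div N then w div N - u div N else u div N - w div N)
     + (if u mod N = w mod N then 0 else 1)"

lemma ld_step: assumes "{a,b} \<in> EE" shows "ld a w \<le> ld b w + 1"
proof -
  have "adj a b" using assms EE_mem by blast
  then show ?thesis unfolding adj_def ld_def by auto
qed

lemma walk_lower: "walk EE xs \<Longrightarrow> ld (hd xs) (last xs) + 1 \<le> length xs"
proof (induction xs)
  case Nil then show ?case by (simp add: walk_def)
next
  case (Cons a xs)
  show ?case
  proof (cases xs)
    case Nil then show ?thesis by (simp add: ld_def)
  next
    case (Cons b xs')
    have h2: "walk EE (a # b # xs')" using Cons.prems(1) \<open>xs = b # xs'\<close> by simp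
    have e: "{a,b} \<in> EE" and w: "walk EE xs" using h2 \<open>xs = b # xs'\<close> by (simp_all add: walk_Cons2)
    have "ld b (last xs) + 1 \<le> length xs" using Cons.IH[OF w] Cons by simp
    moreover have "ld a (last xs) \<le> ld b (last xs) + 1" by (rule ld_step[OF e])
    ultimately show ?thesis using Cons by simp
  qed
qed

lemma edge_walk: "{u,w} \<in> EE \<Longrightarrow> walk_between EE u w [u,w]"
  unfolding walk_between_def using walk_Cons2[of EE u w "[]"] walk_single by simp

lemma vert: "x < N \<Longrightarrow> j + k < d \<Longrightarrow> \<exists>xs. walk_between EE (j*N + x) ((j+k)*N + x) xs \<and> length xs = Suc k"
proof (induction k)
  case 0
  then show ?case using walk_single unfolding walk_between_def by (intro exI[of _ "[j*N+x]"]) simp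
next
  case (Suc k)
  then obtain xs where xs: "walk_between EE (j*N + x) ((j+k)*N + x) xs" "length xs = Suc k" by auto
  have m1: "(j+k)*N + x < d*N"
  proof -
    have "(j+k)*N + x < (j+k+1)*N" using Suc by simp
    also have "\<dots> \<le> d*N" using Suc by (intro mult_right_mono) auto
    finally show ?thesis .
  qed
  have m2: "(j+Suc k)*N + x < d*N"
  proof -
    have "(j+Suc k)*N + x < (j+Suc k+1)*N" using Suc by simp
    also have "\<dots> \<le> d*N" using Suc by (intro mult_right_mono) auto
    finally show ?thesis .
  qed
  have dm: "((j+k)*N + x) div N = j+k" "((j+k)*N + x) mod N = x"
     "((j+Suc k)*N + x) div N = j+Suc k" "((j+Suc k)*N + x) mod N = x"
    using Suc by (simp_all only: divmod1 divmod2)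
  have "{(j+k)*N + x, (j+Suc k)*N + x} \<in> EE"
    unfolding EE_mem using m1 m2 dm unfolding VV_def adj_def by auto
  from walk_between_app[OF xs(1) edge_walk[OF this]] xs(2) show ?case by auto
qed

lemma conn_walk:
  assumes u: "u \<in> VV" and w: "w \<in> VV"
  shows "\<exists>xs. walk_between EE u w xs \<and> length xs = Suc (ld u w)"
proof -
  define ju where "ju = u div N"
  define xu where "xu = u mod N"
  define jw where "jw = w div N"
  define xw where "xw = w mod N"
  have uu: "u = ju*N + xu" unfolding ju_def xu_def using div_mult_mod_eq[of u N] by simp
  have ww: "w = jw*N + xw" unfolding jw_def xw_def using div_mult_mod_eq[of w N] by simp
  have xuN: "xu < N" and xwN: "xw < N" unfolding xu_def xw_def by simp_all
  have jud: "ju < d" using u unfolding VV_def ju_def by (simp add: less_mult_imp_div_less)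
  have jwd: "jw < d" using w unfolding VV_def jw_def by (simp add: less_mult_imp_div_less)
  define u' where "u' = ju*N + xw"
  have u'V: "u' < d*N"
  proof -
    have "ju*N + xw < (ju+1)*N" using xwN by simp
    also have "\<dots> \<le> d*N" using jud by (intro mult_right_mono) auto
    finally show ?thesis unfolding u'_def .
  qed
  obtain ys where ys: "walk_between EE u u' ys" "length ys = (if xu = xw then 1 else 2)"
  proof (cases "xu = xw")
    case True
    then show ?thesis using that[of "[u]"] uu u'_def walk_single[of EE u] unfolding walk_between_def by simp
  next
    case False
    have "u' div N = ju" "u' mod N = xw" unfolding u'_def using xwN by (simp_all only: divmod1 divmod2)
    then have a: "adj u u'" unfolding adj_def using ju_def by simp
    have ne: "u \<noteq> u'" using uu u'_def False by simp
    have "u' \<in> VV" using u'V unfolding VV_def by simp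
    then have "{u, u'} \<in> EE" unfolding EE_mem using u a ne by simp
    then show ?thesis using that[of "[u,u']"] edge_walk False by simp
  qed
  obtain zs where zs: "walk_between EE u' w zs" "length zs = Suc (if ju \<le> jw then jw - ju else ju - jw)"
  proof (cases "ju \<le> jw")
    case True
    then obtain zs where "walk_between EE (ju*N + xw) ((ju + (jw - ju))*N + xw) zs" "length zs = Suc (jw - ju)"
      using vert[OF xwN, of ju "jw - ju"] jwd by auto
    then show ?thesis using that[of zs] True ww u'_def by simp
  next
    case False
    then obtain zs where z1: "walk_between EE (jw*N + xw) ((jw + (ju - jw))*N + xw) zs" and z2: "length zs = Suc (ju - jw)"
      using vert[OF xwN, of jw "ju - jw"] jud by auto
    then show ?thesis using that[of "rev zs"] walk_between_rev[OF z1] False ww u'_def by simp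
  qed
  from walk_between_app[OF ys(1) zs(1)] ys(2) zs(2) show ?thesis
    unfolding ld_def ju_def[symmetric] jw_def[symmetric] xu_def[symmetric] xw_def[symmetric]
    by (intro exI[of _ "ys @ tl zs"]) (auto split: if_splits)
qed

lemma dist_eq: assumes u: "u \<in> VV" and w: "w \<in> VV" shows "dist EE u w = ld u w"
  unfolding dist_def
proof (rule Least_equality)
  show "\<exists>xs. walk_between EE u w xs \<and> length xs = Suc (ld u w)" by (rule conn_walk[OF u w])
next
  fix m assume "\<exists>xs. walk_between EE u w xs \<and> length xs = Suc m"
  then obtain xs where "walk_between EE u w xs" "length xs = Suc m" by auto
  then show "ld u w \<le> m" using walk_lower unfolding walk_between_def by fastforce
qed

end


context chain begin

definition TT :: nat where "TT = (d+1)*N - q - 2"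

lemma qN: "q < N" using less_exp[of q] by simp

lemma lev_lt: "v \<in> VV \<Longrightarrow> v div N < d"
  unfolding VV_def by (simp add: less_mult_imp_div_less)

lemma ld_le: assumes "u \<in> VV" "w \<in> VV" shows "ld u w \<le> d"
  using lev_lt[OF assms(1)] lev_lt[OF assms(2)] unfolding ld_def by auto

lemma diam_eq: "diam VV EE = d"
proof -
  define S where "S = {dist EE u v | u v. u \<in> VV \<and> v \<in> VV}"
  have S1: "\<forall>s\<in>S. s \<le> d" unfolding S_def using dist_eq ld_le by auto
  then have fin: "finite S" by (meson finite_atMost finite_subset atMost_iff subsetI)
  define w where "w = (d - 1)*N + 1"
  have N2': "2 \<le> N" by (rule N2)
  have wV: "w \<in> VV"
  proof -
    have "(d - 1)*N + 1 < (d - 1)*N + N" using N2' by simp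
    also have "\<dots> = d*N" using d1 by (cases d) auto
    finally show ?thesis unfolding VV_def w_def by simp
  qed
  have zV: "0 \<in> VV" unfolding VV_def using d1 by simp
  have wd: "w div N = d - 1" "w mod N = 1" unfolding w_def using N2' by (simp_all only: divmod1 divmod2; simp)+
  have "ld 0 w = d" unfolding ld_def using wd d1 by simp
  have "dist EE 0 w \<in> S" unfolding S_def using zV wV by blast
  then have "d \<in> S" using dist_eq[OF zV wV] \<open>ld 0 w = d\<close> by simp
  then show ?thesis unfolding diam_def S_def[symmetric] using S1 fin by (intro Max_eqI) auto
qed

lemma connected: "connected_graph VV EE"
proof -
  have "0 \<in> VV" unfolding VV_def using d1 by simp
  then show ?thesis unfolding connected_graph_def using graph conn_walk by blast
qed

lemma maxdeg: "max_degree VV EE = N - 1 + (if 2 \<le> d then 1 else 0) + (if 3 \<le> d then 1 else 0)"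
  unfolding max_degree_def
proof (rule Max_eqI)
  show "finite (degree EE ` VV)" unfolding VV_def by simp
next
  fix y assume "y \<in> degree EE ` VV"
  then obtain v where v: "v \<in> VV" "y = degree EE v" by auto
  show "y \<le> N - 1 + (if 2 \<le> d then 1 else 0) + (if 3 \<le> d then 1 else 0)"
    using degree_eq[OF v(1)] lev_lt[OF v(1)] v(2) by auto
next
  define v0 where "v0 = (if 3 \<le> d then N else 0)"
  have v0V: "v0 \<in> VV" unfolding v0_def VV_def using d1 by auto
  have "v0 div N = (if 3 \<le> d then 1 else 0)" unfolding v0_def by simp
  then have "degree EE v0 = N - 1 + (if 2 \<le> d then 1 else 0) + (if 3 \<le> d then 1 else 0)"
    using degree_eq[OF v0V] by auto
  then show "N - 1 + (if 2 \<le> d then 1 else 0) + (if 3 \<le> d then 1 else 0) \<in> degree EE ` VV"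
    using v0V by (metis image_eqI)
qed

lemma lohi_bounds: assumes v: "v \<in> VV" shows "1 \<le> lo v \<and> hi v \<le> TT"
proof -
  define j where "j = v div N"
  define x where "x = v mod N"
  have xN: "x < N" unfolding x_def by simp
  have jd: "j < d" unfolding j_def by (rule lev_lt[OF v])
  have ab: "1 \<le> aa q x" "aa q x + q \<le> N" using aa_bounds[OF xN] by auto
  have m1: "j*N \<le> (d-1)*N" using jd by (intro mult_right_mono) auto
  have m2: "j + 1 < d \<Longrightarrow> j*N + N \<le> (d-1)*N"
  proof -
    assume "j + 1 < d" then have "(j+1)*N \<le> (d-1)*N" by (intro mult_right_mono) auto
    then show ?thesis by simp
  qed
  have m3: "0 < j \<Longrightarrow> N \<le> j*N" by simp
  have dd: "(d+1)*N = (d-1)*N + 2*N" using d1 by (cases d) auto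
  have N2': "2 \<le> N" by (rule N2)
  have lo: "lo v = aa q x + j*N - (if 0 < j then 1 else 0)" unfolding lo_def j_def x_def by simp
  have hi: "hi v = aa q x + j*N + N - 2 + (if j + 1 < d then 1 else 0)" unfolding hi_def j_def x_def by simp
  have L: "1 \<le> lo v"
  proof (cases "0 < j")
    case True
    then have "lo v = aa q x + j*N - 1" using lo by simp
    then show ?thesis using ab m3[OF True] N2' by linarith
  next
    case False
    then have "lo v = aa q x" using lo by simp
    then show ?thesis using ab by linarith
  qed
  have H: "hi v \<le> TT"
  proof (cases "j + 1 < d")
    case True
    then have "hi v = aa q x + j*N + N - 2 + 1" using hi by simp
    then show ?thesis unfolding TT_def dd using ab m2[OF True] N2' by linarith
  next
    case False
    then have "hi v = aa q x + j*N + N - 2" using hi by simp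
    then show ?thesis unfolding TT_def dd using ab m1 N2' by linarith
  qed
  show ?thesis using L H by simp
qed

lemma col_range: "e \<in> EE \<Longrightarrow> col e \<in> {1..TT}"
proof -
  assume "e \<in> EE"
  then obtain u w where e: "e = {u,w}" "u \<in> VV" "w \<in> VV" "u \<noteq> w" "adj u w" unfolding EE_def by auto
  then have "e \<in> edges_at EE u" unfolding edges_at_def using \<open>e \<in> EE\<close> by simp
  then have "col e \<in> {lo u..hi u}" using col_img[OF e(2)] by blast
  then show ?thesis using lohi_bounds[OF e(2)] by auto
qed

definition tq :: nat where "tq = 2*N - q - 2"

lemma clique_used: assumes j: "j < d" and c: "1 \<le> c" "c \<le> tq" shows "\<exists>e\<in>EE. col e = c + j*N"
proof -
  have N2': "2 \<le> N" by (rule N2)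
  have "\<exists>x y. x < N \<and> y < N \<and> x \<noteq> y \<and> kap q x y = c"
  proof (cases "c \<le> N - 1")
    case True
    have "kap q 0 ` {y. y < N \<and> y \<noteq> 0} = {1..1 + N - 2}" using kl_img[of 0 q] aa_0 by simp
    moreover have "c \<in> {1..1 + N - 2}" using True c N2' by simp
    ultimately have "c \<in> kap q 0 ` {y. y < N \<and> y \<noteq> 0}" by simp
    then obtain y where "y < N" "y \<noteq> 0" "kap q 0 y = c" by blast
    then show ?thesis by (intro exI[of _ 0] exI[of _ y]) simp
  next
    case False
    have l: "N - 1 < N" by simp
    have aN: "aa q (N - 1) = N - q" using aa_last[of q] by simp
    have "kap q (N-1) ` {y. y < N \<and> y \<noteq> N - 1} = {N - q..N - q + N - 2}" using kl_img[OF l] aN by simp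
    moreover have "N - q \<le> c" "c \<le> N - q + N - 2" using False c qN unfolding tq_def by linarith+
    then have "c \<in> {N - q..N - q + N - 2}" by simp
    ultimately have "c \<in> kap q (N-1) ` {y. y < N \<and> y \<noteq> N - 1}" by simp
    then obtain y where "y < N" "y \<noteq> N - 1" "kap q (N-1) y = c" by blast
    then show ?thesis using l by (intro exI[of _ "N-1"] exI[of _ y]) simp
  qed
  then obtain x y where xy: "x < N" "y < N" "x \<noteq> y" "kap q x y = c" by auto
  have dm: "(j*N + x) div N = j" "(j*N + x) mod N = x" "(j*N + y) div N = j" "(j*N + y) mod N = y"
    using xy by (simp_all only: divmod1 divmod2)
  have lt: "j*N + z < d*N" if "z < N" for z
  proof -
    have "j*N + z < (j+1)*N" using that by simp
    also have "\<dots> \<le> d*N" using j by (intro mult_right_mono) auto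
    finally show ?thesis .
  qed
  have a: "adj (j*N + x) (j*N + y)" unfolding adj_def using dm by simp
  have "{j*N + x, j*N + y} \<in> EE" unfolding EE_mem VV_def using lt xy a by simp
  moreover have "col {j*N + x, j*N + y} = c + j*N" using col_eq[OF a] dm xy unfolding colr_def by simp
  ultimately show ?thesis by blast
qed

lemma vert_used: assumes j: "j + 1 < d" shows "\<exists>e\<in>EE. col e = (j+1)*N"
proof -
  have dm: "(j*N + 0) div N = j" "(j*N + 0) mod N = 0" "((j+1)*N + 0) div N = j+1" "((j+1)*N + 0) mod N = 0"
    by (simp_all only: divmod1 divmod2 Npos)
  have lt: "(j+1)*N < d*N" using j by (intro mult_less_mono1) auto
  have lt2: "j*N < d*N" using j by (intro mult_less_mono1) auto
  have a: "adj (j*N) ((j+1)*N)" unfolding adj_def using dm by simp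
  have ne: "j*N \<noteq> (j+1)*N" by simp
  have "{j*N, (j+1)*N} \<in> EE" unfolding EE_mem VV_def using lt lt2 a ne by simp
  moreover have "col {j*N, (j+1)*N} = (j+1)*N" using col_eq[OF a] dm aa_0[of q] unfolding colr_def by simp
  ultimately show ?thesis by blast
qed

lemma all_used: "j < d \<Longrightarrow> 1 \<le> i \<Longrightarrow> i \<le> j*N + tq \<Longrightarrow> \<exists>e\<in>EE. col e = i"
proof (induction j arbitrary: i)
  case 0 then show ?case using clique_used[of 0 i] by simp
next
  case (Suc j)
  have t1: "N - 1 \<le> tq" unfolding tq_def using qN by linarith
  show ?case
  proof (cases "i \<le> j*N + tq")
    case True then show ?thesis using Suc by simp
  next
    case False
    show ?thesis
    proof (cases "i = (j+1)*N")
      case True then show ?thesis using vert_used[of j] Suc.prems by simp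
    next
      case F2: False
      have "(j+1)*N < i" using False F2 t1 by simp
      then obtain c where c: "i = c + Suc j * N" "1 \<le> c" "c \<le> tq" using Suc.prems
        by (intro that[of "i - Suc j * N"]) auto
      then show ?thesis using clique_used[of "Suc j" c] Suc.prems by simp
    qed
  qed
qed

lemma TT_eq: "TT = (d - 1)*N + tq"
proof -
  have "(d+1)*N = (d-1)*N + 2*N" using d1 by (cases d) auto
  then show ?thesis unfolding TT_def tq_def using qN N2 by linarith
qed

lemma coloring: "interval_coloring VV EE TT col"
  unfolding interval_coloring_def
proof (intro conjI ballI)
  fix e assume "e \<in> EE" then show "col e \<in> {1..TT}" by (rule col_range)
next
  fix i assume "i \<in> {1..TT}"
  then show "\<exists>e\<in>EE. col e = i" using all_used[of "d - 1" i] d1 TT_eq by simp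
next
  fix v assume "v \<in> VV" then show "inj_on col (edges_at EE v)" by (rule inj_col)
next
  fix v assume "v \<in> VV" then show "\<exists>a b. col ` edges_at EE v = {a..b}" using col_img by blast
qed

lemma TT_ge1: "1 \<le> TT" unfolding TT_eq tq_def using qN N2 by linarith

lemma finEE: "finite EE"
proof -
  have "EE \<subseteq> Pow VV" unfolding EE_def by auto
  then show ?thesis unfolding VV_def by (simp add: finite_subset)
qed

lemma t_le: "has_interval_coloring VV EE t \<Longrightarrow> t \<le> card EE"
proof -
  assume "has_interval_coloring VV EE t"
  then obtain c where c: "interval_coloring VV EE t c" unfolding has_interval_coloring_def by auto
  then have h: "\<forall>i\<in>{1..t}. \<exists>e\<in>EE. c e = i" unfolding interval_coloring_def by blast
  have "{1..t} \<subseteq> c ` EE"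
  proof
    fix i assume "i \<in> {1..t}"
    then obtain e where "e \<in> EE" "c e = i" using h by blast
    then show "i \<in> c ` EE" by blast
  qed
  then have "card {1..t} \<le> card (c ` EE)" by (intro card_mono) (simp_all add: finEE)
  also have "\<dots> \<le> card EE" by (rule card_image_le[OF finEE])
  finally show ?thesis by simp
qed

lemma W_ge: "TT \<le> W VV EE"
  unfolding W_def
proof (rule Max_ge)
  show "finite {t. has_interval_coloring VV EE t}"
    by (rule finite_subset[of _ "{..card EE}"]) (auto dest: t_le)
  show "TT \<in> {t. has_interval_coloring VV EE t}"
    using coloring TT_ge1 unfolding has_interval_coloring_def by auto
qed

lemma inN: "in_N VV EE"
  unfolding in_N_def has_interval_coloring_def using coloring TT_ge1 by auto

end

theorem theorem5:
  fixes d q :: nat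
  assumes "d \<ge> 1" and "q \<ge> 1"
  shows "\<exists>(V :: nat set) E.
           connected_graph V E \<and> diam V E = d \<and>
           max_degree V E = (if d = 1 then 2 ^ q - 1 else if d = 2 then 2 ^ q else 2 ^ q + 1) \<and>
           in_N V E \<and>
           int (W V E) \<ge> int (d + 1) * (int (max_degree V E) - 1) - int q
                          + (if d = 1 then 2 else if d = 2 then 1 else -2)"
proof -
  interpret chain d q using assms by unfold_locales
  define M where "M = (2::nat)^q"
  have M2: "2 \<le> M" unfolding M_def using N2 .
  have qM: "q < M" unfolding M_def using qN .
  have md: "max_degree VV EE = (if d = 1 then 2 ^ q - 1 else if d = 2 then 2 ^ q else 2 ^ q + 1)"
    using maxdeg assms(1) by auto
  have TT: "int TT = int (d+1) * int M - int q - 2"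
  proof -
    have "(d+1)*M \<ge> 2*M" by (intro mult_right_mono) (use assms in auto)
    then have "(d+1)*M \<ge> q + 2" using qM by linarith
    then show ?thesis unfolding TT_def M_def[symmetric] by (simp add: of_nat_diff algebra_simps)
  qed
  have W: "int TT \<le> int (W VV EE)" using W_ge by simp
  have "int (W VV EE) \<ge> int (d + 1) * (int (max_degree VV EE) - 1) - int q
                          + (if d = 1 then 2 else if d = 2 then 1 else -2)"
  proof (cases "d = 1")
    case True
    have "int (max_degree VV EE) = int M - 1" using md True M2 unfolding M_def by (simp add: of_nat_diff)
    then show ?thesis using W TT True by (simp add: algebra_simps)
  next
    case F1: False
    show ?thesis
    proof (cases "d = 2")
      case True
      have "int (max_degree VV EE) = int M" using md True unfolding M_def by simp
      then show ?thesis using W TT True by (simp add: algebra_simps)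
    next
      case False
      have "int (max_degree VV EE) = int M + 1" using md False F1 unfolding M_def by simp
      then show ?thesis using W TT False F1 by (simp add: algebra_simps)
    qed
  qed
  then show ?thesis using connected diam_eq md inN by blast
qed


end
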